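(* With the convention $W_0(t)=2$, the generating function $W(t,z)=\sum_{n\ge 0}W_n(t)z^n$ is \[ W(t,z)=\frac{2-2z^2}{1-z-2z^2-2(t-1)z^3}. \]
   Context: Seating model. A circular table has $n\ge 1$ seats, with exactly one napkin between each pair of adjacent seats ($n$ napkins in total). "Left" and "right" are from the perspective of a seated diner. Diners $1,\dots,n$ arrive in this order and a maitre d' chooses a seat for each. A preference order is $\sigma=(\sigma_1,\dots,\sigma_n)\in\{-1,1\}^n$, where $\sigma_j=+1$ means diner $j$ prefers the napkin on their right and $\sigma_j=-1$ the napkin on their left. When diner $j$ is seated, they take their preferred adjacent napkin if it is still on the table; otherwise the other adjacent napkin if still on the table; otherwise they are napkinless. The maitre d' observes which napkin each seated diner takes. The "previous diner" means the most recently seated diner. Algorithm $W$ (trap setting). Seat diner 1; the primary direction $d\in\{\text{left},\text{right}\}$ is the side of the napkin diner 1 takes. All movement below is in direction $d$. (W1) If the two seats at distance 1 and 2 in direction $d$ from the previous diner's seat are both empty, go to W2; otherwise go to W4. (W2) If the previous diner took the napkin on their side $d$, seat the next diner two seats in direction $d$ from the previous diner and return to W1; otherwise go to W3. (W3) Seat the next diner one seat in direction $d$ from the previous diner and return to W1. (W4) Seat all remaining diners, one at a time in order of arrival, in the empty seats, in the order in which these seats are encountered moving in direction $d$ starting from diner 1's seat. For $n\ge1$, $\nu_W(\sigma)$ is the number of napkinless diners when the $n$ diners with preference order $\sigma$ are seated at the circular table with $n$ seats by algorithm $W$, and $W_n(t)=\sum_{\sigma\in\{-1,1\}^n}t^{\nu_W(\sigma)}$.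 *)

theory Defs
  imports Main "HOL-Computational_Algebra.Formal_Power_Series"
begin

text \<open>Napkin i lies between seat i and seat (i+1) mod n.
  For a diner at seat s, the right napkin is napkin s and the left napkin is napkin (s+n-1) mod n.  Preferences are +1 (right) / -1 (left).\<close>

definition mv :: "nat \<Rightarrow> nat \<Rightarrow> int \<Rightarrow> nat \<Rightarrow> nat" where
  "mv n s d k = nat ((int s + d * int k) mod int n)"

definition side_nap :: "nat \<Rightarrow> int \<Rightarrow> nat \<Rightarrow> nat" where
  "side_nap n d s = (if d = 1 then s else (s + n - 1) mod n)"

definition take_napkin :: "nat \<Rightarrow> nat set \<Rightarrow> nat \<Rightarrow> int \<Rightarrow> nat option" where
  "take_napkin n T s p =
     (let pr = side_nap n p s; ot = side_nap n (- p) s in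
      if pr \<notin> T then Some pr else if ot \<notin> T then Some ot else None)"

text \<open>Seat for the next diner, given occupied seats Occ, previous seat s, napkin taken by the previous
  diner pn, and whether we are already in step W4.  Returns the seat and the new W4 flag.\<close>
definition next_seat :: "nat \<Rightarrow> int \<Rightarrow> nat set \<Rightarrow> nat \<Rightarrow> nat option \<Rightarrow> bool \<Rightarrow> nat \<times> bool" where
  "next_seat n d Occ s pn w4 =
     (if \<not> w4 \<and> mv n s d 1 \<notin> Occ \<and> mv n s d 2 \<notin> Occ
      then (if pn = Some (side_nap n d s) then mv n s d 2 else mv n s d 1, False)
      else (mv n 0 d (LEAST k. 1 \<le> k \<and> mv n 0 d k \<notin> Occ), True))"

text \<open>State: occupied seats, taken napkins, previous seat, previous napkin, W4 flag, napkinless count.\<close>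
type_synonym wstate = "nat set \<times> nat set \<times> nat \<times> nat option \<times> bool \<times> nat"

fun run_W :: "nat \<Rightarrow> int \<Rightarrow> wstate \<Rightarrow> int list \<Rightarrow> wstate" where
  "run_W n d st [] = st"
| "run_W n d (Occ, T, s, pn, w4, c) (p # ps) =
     (let (s', w4') = next_seat n d Occ s pn w4;
          nap = take_napkin n T s' p
      in run_W n d (insert s' Occ, T \<union> set_option nap, s', nap, w4',
                    c + (if nap = None then 1 else 0)) ps)"

text \<open>Diner 1 sits at seat 0 (by rotational symmetry); the primary direction is the side of the napkin
  diner 1 takes, which is the preferred side sigma_1 since all napkins are present.\<close>
fun nu_W :: "int list \<Rightarrow> nat" where
  "nu_W [] = 0"
| "nu_W (p # ps) =
     (let n = Suc (length ps); nap1 = take_napkin n {} 0 p;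
          (_, _, _, _, _, c) = run_W n p ({0}, set_option nap1, 0, nap1, False, 0) ps
      in c)"

definition prefs :: "nat \<Rightarrow> int list set" where
  "prefs n = {xs. length xs = n \<and> set xs \<subseteq> {-1, 1}}"

definition W_poly :: "nat \<Rightarrow> real \<Rightarrow> real" where
  "W_poly n t = (\<Sum>\<sigma>\<in>prefs n. t ^ nu_W \<sigma>)"

definition W_gf :: "real \<Rightarrow> real fps" where
  "W_gf t = Abs_fps (\<lambda>n. if n = 0 then 2 else W_poly n t)"

end

theory Submission
  imports Defs
begin

unbundle fps_syntax

definition R :: "nat \<Rightarrow> int \<Rightarrow> nat \<Rightarrow> nat" where "R n d k = mv n 0 d k"
definition N :: "nat \<Rightarrow> int \<Rightarrow> nat \<Rightarrow> nat" where "N n d k = side_nap n d (R n d k)"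
definition napk :: "nat \<Rightarrow> nat \<Rightarrow> nat set" where "napk n e = {e, (e + n - 1) mod n}"
definition cnt :: "wstate \<Rightarrow> nat" where "cnt st = snd (snd (snd (snd (snd st))))"

lemma R_int: "n > 0 \<Longrightarrow> int (R n d k) = (d * int k) mod int n"
  by (simp add: R_def mv_def)

lemma R_lt: "n > 0 \<Longrightarrow> R n d k < n"
  using R_int[of n d k]
  by (metis of_nat_0_less_iff of_nat_less_iff pos_mod_bound)

lemma R_0[simp]: "R n d 0 = 0"
  by (simp add: R_def mv_def)

lemma R_n: "R n d n = 0"
  by (simp add: R_def mv_def)

lemma mv_R: "n > 0 \<Longrightarrow> mv n (R n d k) d j = R n d (k + j)"
  by (simp add: mv_def R_int) (simp add: R_def mv_def mod_add_left_eq distrib_left)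

lemma N_int: "n > 0 \<Longrightarrow> d \<in> {1,-1} \<Longrightarrow>
   int (N n d k) = (d * int k + (if d = 1 then 0 else -1)) mod int n"
proof -
  assume n: "n > 0" and d: "d \<in> {1,-1}"
  show ?thesis
  proof (cases "d = 1")
    case True
    then show ?thesis using n by (simp add: N_def side_nap_def R_int)
  next
    case False
    then have dm: "d = -1" using d by auto
    have "int (N n d k) = int ((R n d k + n - 1) mod n)" using dm by (simp add: N_def side_nap_def)
    also have "\<dots> = (int (R n d k) + int n - 1) mod int n"
      using n by (simp add: zmod_int of_nat_diff)
    also have "\<dots> = ((- int k) mod int n + int n - 1) mod int n" using n dm by (simp add: R_int)
    also have "\<dots> = (- int k - 1) mod int n"
      by (metis (no_types, opaque_lifting) add.commute add_diff_eq diff_add_cancel mod_add_left_eq mod_add_self1)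
    finally show ?thesis using dm by simp
  qed
qed

lemma N_lt: "n > 0 \<Longrightarrow> d \<in> {1,-1} \<Longrightarrow> N n d k < n"
  using N_int[of n d k]
  by (metis of_nat_0_less_iff of_nat_less_iff pos_mod_bound)

lemma mod_inj_aux:
  assumes "d \<in> {1,-1}" "a < n" "b < n"
    "(d * int a + e) mod int n = (d * int b + e) mod int n"
  shows "a = b"
proof -
  have "int n dvd (d * int a + e) - (d * int b + e)"
    using assms(4) by (simp add: mod_eq_dvd_iff)
  then have "int n dvd d * (int a - int b)" by (simp add: algebra_simps)
  then have "int n dvd (int a - int b)" using assms(1)
    by (auto, metis dvd_minus_iff minus_diff_eq)
  moreover have "\<bar>int a - int b\<bar> < int n" using assms(2,3) by auto
  ultimately have "int a - int b = 0"
    using dvd_imp_le_int[of "int a - int b" "int n"] by fastforce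
  then show ?thesis by simp
qed

lemma R_inj: "n > 0 \<Longrightarrow> d \<in> {1,-1} \<Longrightarrow> a < n \<Longrightarrow> b < n \<Longrightarrow> R n d a = R n d b \<Longrightarrow> a = b"
  using mod_inj_aux[of d a n b 0] R_int[of n d a] R_int[of n d b] by simp

lemma N_inj: "n > 0 \<Longrightarrow> d \<in> {1,-1} \<Longrightarrow> a < n \<Longrightarrow> b < n \<Longrightarrow> N n d a = N n d b \<Longrightarrow> a = b"
  using mod_inj_aux[of d a n b "if d = 1 then 0 else -1"] N_int[of n d a] N_int[of n d b] by simp

lemma R_inj_on: "n > 0 \<Longrightarrow> d \<in> {1,-1} \<Longrightarrow> inj_on (R n d) {..<n}"
  by (auto intro: inj_onI R_inj)

lemma N_inj_on: "n > 0 \<Longrightarrow> d \<in> {1,-1} \<Longrightarrow> inj_on (N n d) {..<n}"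
  by (auto intro: inj_onI N_inj)

lemma side_nap_other: "n > 0 \<Longrightarrow> d \<in> {1,-1} \<Longrightarrow> side_nap n (-d) (R n d (Suc k)) = N n d k"
proof -
  assume n: "n > 0" and d: "d \<in> {1,-1}"
  have "int (side_nap n (-d) (R n d (Suc k))) = int (N n d k)"
  proof (cases "d = 1")
    case True
    have "int (side_nap n (-d) (R n d (Suc k))) = int ((R n d (Suc k) + n - 1) mod n)"
      using True by (simp add: side_nap_def)
    also have "\<dots> = (int (R n d (Suc k)) + int n - 1) mod int n"
      using n by (simp add: zmod_int of_nat_diff)
    also have "\<dots> = ((int k + 1) mod int n + int n - 1) mod int n" using n True by (simp add: R_int add.commute)
    also have "\<dots> = int k mod int n"
      by (metis (no_types, opaque_lifting) add.commute add_diff_cancel_left' add_diff_eq mod_add_left_eq mod_add_self1)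
    finally show ?thesis using N_int[OF n d, of k] True by simp
  next
    case False
    then have dm: "d = -1" using d by auto
    then show ?thesis using N_int[OF n d, of k] n by (simp add: side_nap_def R_int algebra_simps)
  qed
  then show ?thesis by simp
qed

lemma side_nap_same: "side_nap n d (R n d k) = N n d k"
  by (simp add: N_def)

lemma napk_eq: "p \<in> {1,-1} \<Longrightarrow> napk n e = {side_nap n p e, side_nap n (-p) e}"
  by (auto simp: napk_def side_nap_def)

lemma napk_R: "n > 0 \<Longrightarrow> d \<in> {1,-1} \<Longrightarrow> napk n (R n d (Suc k)) = {N n d k, N n d (Suc k)}"
  using napk_eq[of d n "R n d (Suc k)"] side_nap_other[of n d k] side_nap_same[of n d "Suc k"] by auto

lemma take_None: "p \<in> {1,-1} \<Longrightarrow> take_napkin n T e p = None \<longleftrightarrow> napk n e \<subseteq> T"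
  using napk_eq[of p n e] by (auto simp: take_napkin_def Let_def)

lemma take_sub: "p \<in> {1,-1} \<Longrightarrow> set_option (take_napkin n T e p) \<subseteq> napk n e - T"
  using napk_eq[of p n e] by (auto simp: take_napkin_def Let_def)

lemma cnt_simp[simp]: "cnt (Occ,T,s,pn,w4,c) = c"
  by (simp add: cnt_def)

lemma exists_empty_k:
  assumes "n > 0" "d \<in> {1,-1}" "e < n" "e \<noteq> 0"
  shows "\<exists>k. 1 \<le> k \<and> mv n 0 d k = e"
proof (cases "d = 1")
  case True
  then show ?thesis using assms by (intro exI[of _ e]) (auto simp: mv_def)
next
  case False
  then have dm: "d = -1" using assms by auto
  have "(- int (n - e)) mod int n = (int e + (-1) * int n) mod int n"
    using assms by (simp add: of_nat_diff)
  also have "\<dots> = int e" using assms by (subst mod_mult_self1) simp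
  finally show ?thesis using assms dm by (intro exI[of _ "n - e"]) (auto simp: mv_def)
qed

lemma w4_lemma:
  assumes "n > 0" "d \<in> {1,-1}" "Occ \<subseteq> {..<n}" "0 \<in> Occ" "set ps \<subseteq> {-1,1}"
    "length ps = card ({..<n} - Occ)"
    "\<forall>e\<in>{..<n}-Occ. \<forall>e'\<in>{..<n}-Occ. e \<noteq> e' \<longrightarrow> napk n e \<inter> napk n e' = {}"
    "ps \<noteq> [] \<longrightarrow> w4 \<or> \<not>(mv n s d 1 \<notin> Occ \<and> mv n s d 2 \<notin> Occ)"
  shows "cnt (run_W n d (Occ,T,s,pn,w4,c) ps) = c + card {e \<in> {..<n}-Occ. napk n e \<subseteq> T}"
  using assms(3-)
proof (induction ps arbitrary: Occ T s pn w4 c)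
  case Nil
  have "{..<n} - Occ = {}" using Nil by simp
  then have "{e \<in> {..<n} - Occ. napk n e \<subseteq> T} = {}" by blast
  then show ?case by simp
next
  case (Cons p ps)
  let ?E = "{..<n} - Occ"
  have "card ?E > 0" using Cons.prems by simp
  then obtain e0 where e0: "e0 \<in> ?E" by (metis card_gt_0_iff ex_in_conv)
  then have "e0 \<noteq> 0" "e0 < n" using Cons.prems(2) by (metis DiffD2, simp)
  then obtain k0 where k0: "1 \<le> k0" "mv n 0 d k0 = e0" using exists_empty_k assms by blast
  define K where "K = (LEAST k. 1 \<le> k \<and> mv n 0 d k \<notin> Occ)"
  have K: "1 \<le> K \<and> mv n 0 d K \<notin> Occ"
    unfolding K_def by (rule LeastI[of _ k0]) (use k0 e0 in auto)
  define e where "e = mv n 0 d K"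
  have eE: "e \<in> ?E" using K assms(1) unfolding e_def mv_def
    by (auto simp: nat_less_iff)
  have ns: "next_seat n d Occ s pn w4 = (e, True)"
    using Cons.prems(6) unfolding next_seat_def e_def K_def by auto
  define nap where "nap = take_napkin n T e p"
  have p: "p \<in> {1,-1}" using Cons.prems by auto
  have run: "run_W n d (Occ,T,s,pn,w4,c) (p # ps) =
     run_W n d (insert e Occ, T \<union> set_option nap, e, nap, True, c + (if nap = None then 1 else 0)) ps"
    by (simp add: ns nap_def Let_def del: not_None_eq)
  have E': "{..<n} - insert e Occ = ?E - {e}" by auto
  have IH: "cnt (run_W n d (insert e Occ, T \<union> set_option nap, e, nap, True, c + (if nap = None then 1 else 0)) ps)
     = c + (if nap = None then 1 else 0) + card {e' \<in> ?E - {e}. napk n e' \<subseteq> T \<union> set_option nap}"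
    apply (subst E'[symmetric])
    apply (rule Cons.IH)
    using Cons.prems eE by (auto simp: E')
  have sub: "set_option nap \<subseteq> napk n e" using take_sub[OF p, of n T e] nap_def by auto
  have same: "{e' \<in> ?E - {e}. napk n e' \<subseteq> T \<union> set_option nap} = {e' \<in> ?E - {e}. napk n e' \<subseteq> T}"
  proof -
    { fix e' assume "e' \<in> ?E - {e}"
      then have "napk n e' \<inter> napk n e = {}" using Cons.prems(5) eE by auto
      then have "napk n e' \<subseteq> T \<union> set_option nap \<longleftrightarrow> napk n e' \<subseteq> T" using sub by auto }
    then show ?thesis by auto
  qed
  have fin: "finite ?E" by simp
  have split: "{e' \<in> ?E. napk n e' \<subseteq> T} = (if napk n e \<subseteq> T then insert e {e' \<in> ?E - {e}. napk n e' \<subseteq> T}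
      else {e' \<in> ?E - {e}. napk n e' \<subseteq> T})" using eE by auto
  have nn: "nap = None \<longleftrightarrow> napk n e \<subseteq> T" using take_None[OF p] nap_def by simp
  show ?case unfolding run IH same split using nn by (auto simp: card_insert_if)
qed

lemma prefs_0: "prefs 0 = {[]}"
  by (auto simp: prefs_def)

lemma prefs_Suc: "prefs (Suc m) = Cons (-1) ` prefs m \<union> Cons 1 ` prefs m"
proof
  show "prefs (Suc m) \<subseteq> Cons (-1) ` prefs m \<union> Cons 1 ` prefs m"
  proof
    fix xs assume "xs \<in> prefs (Suc m)"
    then obtain p ps where "xs = p # ps" "length ps = m" "p \<in> {-1,1}" "set ps \<subseteq> {-1,1}"
      by (auto simp: prefs_def length_Suc_conv)
    then show "xs \<in> Cons (-1) ` prefs m \<union> Cons 1 ` prefs m" by (auto simp: prefs_def)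
  qed
qed (auto simp: prefs_def)

lemma finite_prefs: "finite (prefs m)"
  by (induction m) (auto simp: prefs_0 prefs_Suc)

lemma sum_prefs_Suc:
  "(\<Sum>xs\<in>prefs (Suc m). f xs) = (\<Sum>ps\<in>prefs m. f ((-1) # ps)) + (\<Sum>ps\<in>prefs m. f (1 # ps))"
proof -
  have "(\<Sum>xs\<in>prefs (Suc m). f xs) = (\<Sum>xs\<in>Cons (-1) ` prefs m. f xs) + (\<Sum>xs\<in>Cons 1 ` prefs m. f xs)"
    unfolding prefs_Suc by (rule sum.union_disjoint) (auto simp: finite_prefs)
  also have "\<dots> = (\<Sum>ps\<in>prefs m. f ((-1) # ps)) + (\<Sum>ps\<in>prefs m. f (1 # ps))"
    by (simp add: sum.reindex)
  finally show ?thesis .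
qed

lemma card_prefs: "card (prefs m) = 2 ^ m"
proof (induction m)
  case 0 then show ?case by (simp add: prefs_0)
next
  case (Suc m)
  have "card (prefs (Suc m)) = (\<Sum>xs\<in>prefs (Suc m). 1)" by simp
  also have "\<dots> = 2 * card (prefs m)" unfolding sum_prefs_Suc by simp
  finally show ?case using Suc by simp
qed

lemma sum_pm: "(d::int) \<in> {1,-1} \<Longrightarrow> (g (-1) :: real) + g 1 = g d + g (-d)"
  by auto

fun FA :: "real \<Rightarrow> nat \<Rightarrow> real" and FB :: "real \<Rightarrow> nat \<Rightarrow> real" where
  "FA t 0 = 1"
| "FA t (Suc 0) = 2"
| "FA t (Suc (Suc j)) = 2 * (FA t j + t * FB t j)"
| "FB t 0 = 1"
| "FB t (Suc j) = FA t j + FB t j"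

definition F :: "real \<Rightarrow> bool \<Rightarrow> nat \<Rightarrow> real" where
  "F t b j = (if b then FA t j else FB t j)"

lemma FA_rec: "FA t (Suc (Suc (Suc j))) = FA t (Suc (Suc j)) + 2 * FA t (Suc j) + 2 * (t - 1) * FA t j"
  by (cases j) (simp_all add: algebra_simps)

definition Inv :: "nat \<Rightarrow> int \<Rightarrow> nat \<Rightarrow> bool \<Rightarrow> nat set \<Rightarrow> nat \<Rightarrow> wstate \<Rightarrow> bool" where
"Inv n d k b S \<tau> st \<longleftrightarrow> (case st of (Occ,T,s,pn,w4,c) \<Rightarrow>
  d \<in> {1,-1} \<and> k < n \<and> s = R n d k \<and> Occ = R n d ` ({..k} - S) \<and> S \<subseteq> {1..<k} \<and> (\<forall>j\<in>S. Suc j \<notin> S) \<and>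
  T \<subseteq> N n d ` {..k} \<and> (b \<longrightarrow> pn = Some (N n d k) \<and> N n d k \<in> T) \<and>
  (\<not> b \<longrightarrow> 1 \<le> k \<and> pn = Some (N n d (k - 1)) \<and> N n d k \<notin> T) \<and>
  (\<forall>j\<in>S. N n d (j - 1) \<in> T) \<and> \<tau> = card {j\<in>S. N n d j \<in> T} \<and> w4 = False \<and> c = 0)"

lemma N_notin: "T \<subseteq> N n d ` {..k} \<Longrightarrow> n > 0 \<Longrightarrow> d \<in> {1,-1} \<Longrightarrow> k < x \<Longrightarrow> x < n \<Longrightarrow> N n d x \<notin> T"
proof
  assume "T \<subseteq> N n d ` {..k}" "n > 0" "d \<in> {1,-1}" "k < x" "x < n" "N n d x \<in> T"
  then obtain i where "i \<le> k" "N n d x = N n d i" by auto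
  then have "x = i" using N_inj[of n d x i] \<open>k < x\<close> \<open>x < n\<close> \<open>n > 0\<close> \<open>d \<in> {1,-1}\<close> by simp
  then show False using \<open>i \<le> k\<close> \<open>k < x\<close> by simp
qed

lemma R_notin: "Occ \<subseteq> R n d ` {..k} \<Longrightarrow> n > 0 \<Longrightarrow> d \<in> {1,-1} \<Longrightarrow> k < x \<Longrightarrow> x < n \<Longrightarrow> R n d x \<notin> Occ"
proof
  assume "Occ \<subseteq> R n d ` {..k}" "n > 0" "d \<in> {1,-1}" "k < x" "x < n" "R n d x \<in> Occ"
  then obtain i where "i \<le> k" "R n d x = R n d i" by auto
  then have "x = i" using R_inj[of n d x i] \<open>k < x\<close> \<open>x < n\<close> \<open>n > 0\<close> \<open>d \<in> {1,-1}\<close> by simp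
  then show False using \<open>i \<le> k\<close> \<open>k < x\<close> by simp
qed

lemma N_ne: "n > 0 \<Longrightarrow> d \<in> {1,-1} \<Longrightarrow> x < n \<Longrightarrow> y < n \<Longrightarrow> x \<noteq> y \<Longrightarrow> N n d x \<noteq> N n d y"
  using N_inj by blast

lemma take_same: "n > 0 \<Longrightarrow> d \<in> {1,-1} \<Longrightarrow> N n d x \<notin> T \<Longrightarrow> take_napkin n T (R n d x) d = Some (N n d x)"
  by (simp add: take_napkin_def side_nap_same)

lemma take_other: "n > 0 \<Longrightarrow> d \<in> {1,-1} \<Longrightarrow> N n d x \<notin> T \<Longrightarrow> take_napkin n T (R n d (Suc x)) (-d) = Some (N n d x)"
  by (simp add: take_napkin_def side_nap_other)

lemma trans_R:
  assumes inv: "Inv n d k True S \<tau> (Occ,T,s,pn,w4,c)" and kn: "k + 2 < n" and p: "p \<in> {d, -d}"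
  defines "nap \<equiv> (if p = d then N n d (k+2) else N n d (k+1))"
  shows "run_W n d (Occ,T,s,pn,w4,c) (p#ps) =
           run_W n d (insert (R n d (k+2)) Occ, T \<union> {nap}, R n d (k+2), Some nap, False, 0) ps"
    "Inv n d (k+2) (p = d) (insert (Suc k) S) (if p = d then \<tau> else Suc \<tau>)
       (insert (R n d (k+2)) Occ, T \<union> {nap}, R n d (k+2), Some nap, False, 0)"
proof -
  have n: "n > 0" using kn by simp
  have d: "d \<in> {1,-1}" and s: "s = R n d k" and Occ: "Occ = R n d ` ({..k} - S)" and S: "S \<subseteq> {1..<k}"
    and Sadj: "\<forall>j\<in>S. Suc j \<notin> S" and T: "T \<subseteq> N n d ` {..k}" and pn: "pn = Some (N n d k)"
    and NkT: "N n d k \<in> T" and Sj: "\<forall>j\<in>S. N n d (j - 1) \<in> T" and tau: "\<tau> = card {j\<in>S. N n d j \<in> T}"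
    and w4: "w4 = False" and c: "c = 0"
    using inv by (auto simp: Inv_def)
  have dd: "d \<noteq> -d" using d by auto
  have Occsub: "Occ \<subseteq> R n d ` {..k}" using Occ by auto
  have r1: "R n d (k+1) \<notin> Occ" by (rule R_notin[OF Occsub n d]) (use kn in auto)
  have r2: "R n d (k+2) \<notin> Occ" by (rule R_notin[OF Occsub n d]) (use kn in auto)
  have n1: "N n d (k+1) \<notin> T" by (rule N_notin[OF T n d]) (use kn in auto)
  have n2: "N n d (k+2) \<notin> T" by (rule N_notin[OF T n d]) (use kn in auto)
  have ns: "next_seat n d Occ s pn w4 = (R n d (k+2), False)"
    using r1 r2 n pn w4 unfolding next_seat_def s by (simp add: mv_R side_nap_same)
  have tk: "take_napkin n T (R n d (k+2)) p = Some nap"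
  proof (cases "p = d")
    case True then show ?thesis using take_same[OF n d n2] by (simp add: nap_def)
  next
    case False then have "p = -d" using p by auto
    then show ?thesis using take_other[OF n d n1, of] False by (simp add: nap_def numeral_2_eq_2)
  qed
  show "run_W n d (Occ,T,s,pn,w4,c) (p#ps) =
           run_W n d (insert (R n d (k+2)) Occ, T \<union> {nap}, R n d (k+2), Some nap, False, 0) ps"
    using ns tk c by simp
  have nap_notin: "nap \<notin> T" using n1 n2 nap_def by auto
  have Occ': "insert (R n d (k+2)) Occ = R n d ` ({..k+2} - insert (Suc k) S)"
  proof -
    have "{..k+2} - insert (Suc k) S = insert (k+2) ({..k} - S)"
    proof (intro set_eqI iffI)
      fix x assume "x \<in> {..k+2} - insert (Suc k) S"
      then show "x \<in> insert (k+2) ({..k} - S)" by auto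
    next
      fix x assume "x \<in> insert (k+2) ({..k} - S)"
      then show "x \<in> {..k+2} - insert (Suc k) S" using S by auto
    qed
    then show ?thesis using Occ by simp
  qed
  have neq: "\<forall>j\<in>S. N n d j \<noteq> nap"
  proof
    fix j assume "j \<in> S"
    then have "j < k" using S by auto
    then show "N n d j \<noteq> nap"
      using N_ne[OF n d, of j "k+2"] N_ne[OF n d, of j "k+1"] kn unfolding nap_def by auto
  qed
  have nk1: "N n d (Suc k) \<in> T \<union> {nap} \<longleftrightarrow> p \<noteq> d"
    using n1 N_ne[OF n d, of "k+1" "k+2"] kn by (auto simp: nap_def)
  have cardeq: "card {j\<in>insert (Suc k) S. N n d j \<in> T \<union> {nap}} = (if p = d then \<tau> else Suc \<tau>)"
  proof -
    have A: "{j\<in>S. N n d j \<in> T \<union> {nap}} = {j\<in>S. N n d j \<in> T}" using neq by auto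
    have B: "Suc k \<notin> S" using S by auto
    show ?thesis
    proof (cases "p = d")
      case True
      then have "{j\<in>insert (Suc k) S. N n d j \<in> T \<union> {nap}} = {j\<in>S. N n d j \<in> T}" using A nk1 by auto
      then show ?thesis using True tau by simp
    next
      case False
      then have "{j\<in>insert (Suc k) S. N n d j \<in> T \<union> {nap}} = insert (Suc k) {j\<in>S. N n d j \<in> T}" using A nk1 by auto
      moreover have "finite {j\<in>S. N n d j \<in> T}" using S finite_subset by fastforce
      ultimately show ?thesis using False tau B by simp
    qed
  qed
  have Sadj': "\<forall>j\<in>insert (Suc k) S. Suc j \<notin> insert (Suc k) S" using S Sadj by auto
  have T': "T \<union> {nap} \<subseteq> N n d ` {..k+2}" using T by (auto simp: nap_def)
  have Sj': "\<forall>j\<in>insert (Suc k) S. N n d (j - 1) \<in> T \<union> {nap}" using Sj NkT by auto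
  have bb: "(p = d \<longrightarrow> Some nap = Some (N n d (k+2)) \<and> N n d (k+2) \<in> T \<union> {nap})"
    by (simp add: nap_def)
  have bb2: "(\<not> p = d \<longrightarrow> 1 \<le> k+2 \<and> Some nap = Some (N n d (k+2 - 1)) \<and> N n d (k+2) \<notin> T \<union> {nap})"
    using n2 N_ne[OF n d, of "k+2" "k+1"] kn by (auto simp: nap_def)
  show "Inv n d (k+2) (p = d) (insert (Suc k) S) (if p = d then \<tau> else Suc \<tau>)
       (insert (R n d (k+2)) Occ, T \<union> {nap}, R n d (k+2), Some nap, False, 0)"
  proof -
    have S': "insert (Suc k) S \<subseteq> {1..<k+2}" using S by auto
    note cardeq' = cardeq[symmetric]
    show ?thesis unfolding Inv_def prod.case
      by (intro conjI refl; fact)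
  qed
qed

lemma trans_L:
  assumes inv: "Inv n d k False S \<tau> (Occ,T,s,pn,w4,c)" and kn: "k + 2 < n" and p: "p \<in> {d, -d}"
  defines "nap \<equiv> (if p = d then N n d (k+1) else N n d k)"
  shows "run_W n d (Occ,T,s,pn,w4,c) (p#ps) =
           run_W n d (insert (R n d (k+1)) Occ, T \<union> {nap}, R n d (k+1), Some nap, False, 0) ps"
    "Inv n d (k+1) (p = d) S \<tau>
       (insert (R n d (k+1)) Occ, T \<union> {nap}, R n d (k+1), Some nap, False, 0)"
proof -
  have n: "n > 0" using kn by simp
  have d: "d \<in> {1,-1}" and s: "s = R n d k" and Occ: "Occ = R n d ` ({..k} - S)" and S: "S \<subseteq> {1..<k}"
    and Sadj: "\<forall>j\<in>S. Suc j \<notin> S" and T: "T \<subseteq> N n d ` {..k}" and pn: "pn = Some (N n d (k - 1))"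
    and k1: "1 \<le> k" and NkT: "N n d k \<notin> T" and Sj: "\<forall>j\<in>S. N n d (j - 1) \<in> T" and tau: "\<tau> = card {j\<in>S. N n d j \<in> T}"
    and w4: "w4 = False" and c: "c = 0"
    using inv by (auto simp: Inv_def)
  have Occsub: "Occ \<subseteq> R n d ` {..k}" using Occ by auto
  have r1: "R n d (k+1) \<notin> Occ" by (rule R_notin[OF Occsub n d]) (use kn in auto)
  have r2: "R n d (k+2) \<notin> Occ" by (rule R_notin[OF Occsub n d]) (use kn in auto)
  have n1: "N n d (k+1) \<notin> T" by (rule N_notin[OF T n d]) (use kn in auto)
  have pne: "pn \<noteq> Some (side_nap n d s)"
    using pn N_ne[OF n d, of "k-1" k] k1 kn by (simp add: s side_nap_same)
  have ns: "next_seat n d Occ s pn w4 = (R n d (k+1), False)"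
    using r1 r2 n pne w4 unfolding next_seat_def s by (simp add: mv_R)
  have tk: "take_napkin n T (R n d (k+1)) p = Some nap"
  proof (cases "p = d")
    case True then show ?thesis using take_same[OF n d n1] by (simp add: nap_def)
  next
    case False then have "p = -d" using p by auto
    then show ?thesis using take_other[OF n d NkT] False by (simp add: nap_def)
  qed
  show "run_W n d (Occ,T,s,pn,w4,c) (p#ps) =
           run_W n d (insert (R n d (k+1)) Occ, T \<union> {nap}, R n d (k+1), Some nap, False, 0) ps"
    using ns tk c by simp
  have Occ': "insert (R n d (k+1)) Occ = R n d ` ({..k+1} - S)"
  proof -
    have "{..k+1} - S = insert (k+1) ({..k} - S)"
    proof (intro set_eqI iffI)
      fix x assume "x \<in> {..k+1} - S"
      then show "x \<in> insert (k+1) ({..k} - S)" by auto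
    next
      fix x assume "x \<in> insert (k+1) ({..k} - S)"
      then show "x \<in> {..k+1} - S" using S by auto
    qed
    then show ?thesis using Occ by simp
  qed
  have neq: "\<forall>j\<in>S. N n d j \<noteq> nap"
  proof
    fix j assume "j \<in> S"
    then have "j < k" using S by auto
    then show "N n d j \<noteq> nap"
      using N_ne[OF n d, of j "k"] N_ne[OF n d, of j "k+1"] kn unfolding nap_def by auto
  qed
  have cardeq': "\<tau> = card {j\<in>S. N n d j \<in> T \<union> {nap}}"
  proof -
    have A: "{j\<in>S. N n d j \<in> T \<union> {nap}} = {j\<in>S. N n d j \<in> T}" using neq by auto
    show ?thesis using A tau by simp
  qed
  have S': "S \<subseteq> {1..<k+1}" using S by auto
  have kn1: "k + 1 < n" using kn by simp
  have T': "T \<union> {nap} \<subseteq> N n d ` {..k+1}" using T by (auto simp: nap_def)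
  have Sj': "\<forall>j\<in>S. N n d (j - 1) \<in> T \<union> {nap}" using Sj by auto
  have bb: "(p = d \<longrightarrow> Some nap = Some (N n d (k+1)) \<and> N n d (k+1) \<in> T \<union> {nap})"
    by (simp add: nap_def)
  have bb2: "(\<not> p = d \<longrightarrow> 1 \<le> k+1 \<and> Some nap = Some (N n d (k+1 - 1)) \<and> N n d (k+1) \<notin> T \<union> {nap})"
    using n1 N_ne[OF n d, of "k+1" "k"] kn by (auto simp: nap_def)
  show "Inv n d (k+1) (p = d) S \<tau>
       (insert (R n d (k+1)) Occ, T \<union> {nap}, R n d (k+1), Some nap, False, 0)"
    unfolding Inv_def prod.case
    by (intro conjI refl; fact)
qed

lemma R_image: "n > 0 \<Longrightarrow> d \<in> {1,-1} \<Longrightarrow> R n d ` {..<n} = {..<n}"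
proof -
  assume n: "n > 0" and d: "d \<in> {1,-1}"
  have sub: "R n d ` {..<n} \<subseteq> {..<n}" using R_lt[OF n] by auto
  have "card (R n d ` {..<n}) = card {..<n}" using card_image[OF R_inj_on[OF n d]] by simp
  then show ?thesis using card_subset_eq[OF _ sub] by simp
qed

lemma end_phase:
  assumes inv: "Inv n d k b S \<tau> (Occ,T,s,pn,w4,c)" and kn: "n \<le> k + 2"
    and ps: "length ps = card S + (n - 1 - k)" "set ps \<subseteq> {-1,1}"
  shows "cnt (run_W n d (Occ,T,s,pn,w4,c) ps) = \<tau>"
proof -
  have d: "d \<in> {1,-1}" and kn': "k < n" and s: "s = R n d k" and Occ: "Occ = R n d ` ({..k} - S)" and S: "S \<subseteq> {1..<k}"
    and Sadj: "\<forall>j\<in>S. Suc j \<notin> S" and T: "T \<subseteq> N n d ` {..k}"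
    and Sj: "\<forall>j\<in>S. N n d (j - 1) \<in> T" and tau: "\<tau> = card {j\<in>S. N n d j \<in> T}"
    and w4: "w4 = False" and c: "c = 0"
    using inv by (auto simp: Inv_def)
  have n: "n > 0" using kn' by simp
  have fS: "finite S" using S finite_subset by fastforce
  define U where "U = S \<union> {k<..<n}"
  have U1: "\<forall>a\<in>U. 1 \<le> a \<and> a < n" using S kn' unfolding U_def by auto
  have Usuc: "\<forall>a\<in>U. Suc a \<notin> U"
  proof
    fix a assume a: "a \<in> U"
    show "Suc a \<notin> U"
    proof (cases "a \<in> S")
      case True then show ?thesis using Sadj S unfolding U_def by auto
    next
      case False then have "k < a" "a < n" using a unfolding U_def by auto
      then show ?thesis using kn S unfolding U_def by auto
    qed
  qed
  have A: "{..k} - S \<subseteq> {..<n}" using kn' by auto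
  have E: "{..<n} - Occ = R n d ` U"
  proof -
    have "{..<n} - Occ = R n d ` {..<n} - R n d ` ({..k} - S)" using R_image[OF n d] Occ by simp
    also have "\<dots> = R n d ` ({..<n} - ({..k} - S))"
      by (rule inj_on_image_set_diff[OF R_inj_on[OF n d], symmetric]) (use A in auto)
    also have "{..<n} - ({..k} - S) = U" using S kn' unfolding U_def by auto
    finally show ?thesis .
  qed
  have injU: "inj_on (R n d) U" using R_inj_on[OF n d] U1 by (auto intro: inj_on_subset)
  have cardE: "card ({..<n} - Occ) = card S + (n - 1 - k)"
  proof -
    have "card U = card S + card {k<..<n}" unfolding U_def
      by (rule card_Un_disjoint) (use fS S in auto)
    then show ?thesis using E card_image[OF injU] by simp
  qed
  have napU: "\<And>a. a \<in> U \<Longrightarrow> napk n (R n d a) = {N n d (a - 1), N n d a}"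
  proof -
    fix a assume "a \<in> U"
    then have "1 \<le> a" using U1 by auto
    then show "napk n (R n d a) = {N n d (a - 1), N n d a}"
      using napk_R[OF n d, of "a - 1"] by simp
  qed
  have disj: "\<forall>e\<in>{..<n}-Occ. \<forall>e'\<in>{..<n}-Occ. e \<noteq> e' \<longrightarrow> napk n e \<inter> napk n e' = {}"
  proof (intro ballI impI)
    fix e e' assume "e \<in> {..<n}-Occ" "e' \<in> {..<n}-Occ" "e \<noteq> e'"
    then obtain a b where ab: "a \<in> U" "b \<in> U" "e = R n d a" "e' = R n d b" "a \<noteq> b" using E by auto
    have "a < n" "b < n" "1 \<le> a" "1 \<le> b" using ab U1 by auto
    moreover have "b \<noteq> Suc a" "a \<noteq> Suc b" using Usuc ab by auto
    ultimately have "a - 1 \<noteq> b - 1" "a - 1 \<noteq> b" "a \<noteq> b - 1" "a \<noteq> b" using ab by auto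
    then show "napk n e \<inter> napk n e' = {}" unfolding ab napU[OF ab(1)] napU[OF ab(2)]
      using N_ne[OF n d] \<open>a < n\<close> \<open>b < n\<close> by auto
  qed
  have trap: "{e \<in> {..<n} - Occ. napk n e \<subseteq> T} = R n d ` {j\<in>S. N n d j \<in> T}"
  proof -
    have "\<And>a. a \<in> U \<Longrightarrow> napk n (R n d a) \<subseteq> T \<longleftrightarrow> a \<in> S \<and> N n d a \<in> T"
    proof -
      fix a assume a: "a \<in> U"
      show "napk n (R n d a) \<subseteq> T \<longleftrightarrow> a \<in> S \<and> N n d a \<in> T"
      proof (cases "a \<in> S")
        case True then show ?thesis using napU[OF a] Sj by auto
      next
        case False then have "k < a" "a < n" using a unfolding U_def by auto
        then have "N n d a \<notin> T" using N_notin[OF T n d] by blast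
        then show ?thesis using napU[OF a] False by auto
      qed
    qed
    then show ?thesis unfolding E U_def by auto
  qed
  have cardT: "card {e \<in> {..<n} - Occ. napk n e \<subseteq> T} = \<tau>"
    unfolding trap tau by (rule card_image) (rule inj_on_subset[OF injU], auto simp: U_def)
  have "0 \<in> {..k} - S" using S by auto
  then have zero: "0 \<in> Occ" unfolding Occ using R_0[of n d] by (metis image_eqI)
  have Occn: "Occ \<subseteq> {..<n}" using Occ R_lt[OF n] by auto
  have cond: "\<not>(mv n s d 1 \<notin> Occ \<and> mv n s d 2 \<notin> Occ)"
  proof -
    have "k + 1 = n \<or> k + 2 = n" using kn kn' by auto
    then show ?thesis using zero R_n[of n d] by (auto simp: s mv_R[OF n])
  qed
  have "cnt (run_W n d (Occ,T,s,pn,w4,c) ps) = c + card {e \<in> {..<n}-Occ. napk n e \<subseteq> T}"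
    by (rule w4_lemma[OF n d Occn zero ps(2)]) (use ps(1) cardE disj cond in auto)
  then show ?thesis using cardT c by simp
qed

lemma phase:
  "j = n - 1 - k \<Longrightarrow> Inv n d k b S \<tau> (Occ,T,s,pn,w4,c) \<Longrightarrow>
   (\<Sum>ps\<in>prefs (card S + j). t ^ cnt (run_W n d (Occ,T,s,pn,w4,c) ps)) = t ^ \<tau> * 2 ^ card S * F t b j"
proof (induction j arbitrary: k b S \<tau> Occ T s pn w4 c rule: less_induct)
  case (less j)
  have d: "d \<in> {1,-1}" and kn': "k < n" using less.prems by (auto simp: Inv_def)
  show ?case
  proof (cases "n \<le> k + 2")
    case True
    have "\<forall>ps\<in>prefs (card S + j). cnt (run_W n d (Occ,T,s,pn,w4,c) ps) = \<tau>"
      using end_phase[OF less.prems(2) True] less.prems(1) by (auto simp: prefs_def)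
    then have "(\<Sum>ps\<in>prefs (card S + j). t ^ cnt (run_W n d (Occ,T,s,pn,w4,c) ps)) =
        (\<Sum>ps\<in>prefs (card S + j). t ^ \<tau>)" by simp
    also have "\<dots> = 2 ^ (card S + j) * t ^ \<tau>" by (simp add: card_prefs)
    also have "\<dots> = t ^ \<tau> * 2 ^ card S * F t b j"
    proof -
      have "j = 0 \<or> j = 1" using True less.prems(1) by auto
      then show ?thesis by (auto simp: F_def power_add)
    qed
    finally show ?thesis .
  next
    case False
    then have kn: "k + 2 < n" by simp
    define j' where "j' = n - 1 - (k + 2)"
    have jj: "j = Suc (Suc j')" using less.prems(1) kn unfolding j'_def by simp
    define g where "g p = (\<Sum>ps\<in>prefs (card S + Suc j'). t ^ cnt (run_W n d (Occ,T,s,pn,w4,c) (p # ps)))" for p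
    have "(\<Sum>ps\<in>prefs (card S + j). t ^ cnt (run_W n d (Occ,T,s,pn,w4,c) ps)) = g (-1) + g 1"
      unfolding jj g_def by (simp add: sum_prefs_Suc)
    also have "\<dots> = g d + g (-d)" by (rule sum_pm[OF d])
    also have "\<dots> = t ^ \<tau> * 2 ^ card S * F t b j"
    proof (cases b)
      case True
      have inv: "Inv n d k True S \<tau> (Occ,T,s,pn,w4,c)" using less.prems(2) True by simp
      have fS: "finite S" using less.prems(2) finite_subset by (fastforce simp: Inv_def)
      have nS: "Suc k \<notin> S" using less.prems(2) by (auto simp: Inv_def)
      have cS: "card (insert (Suc k) S) = Suc (card S)" using fS nS by simp
      have gp: "g p = (if p = d then t ^ \<tau> else t ^ Suc \<tau>) * 2 ^ Suc (card S) * F t (p = d) j'"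
        if p: "p \<in> {d, -d}" for p
      proof -
        define nap where "nap = (if p = d then N n d (k+2) else N n d (k+1))"
        have r: "\<And>ps. run_W n d (Occ,T,s,pn,w4,c) (p#ps) =
           run_W n d (insert (R n d (k+2)) Occ, T \<union> {nap}, R n d (k+2), Some nap, False, 0) ps"
          using trans_R(1)[OF inv kn p] unfolding nap_def by simp
        have i: "Inv n d (k+2) (p = d) (insert (Suc k) S) (if p = d then \<tau> else Suc \<tau>)
           (insert (R n d (k+2)) Occ, T \<union> {nap}, R n d (k+2), Some nap, False, 0)"
          using trans_R(2)[OF inv kn p] unfolding nap_def by simp
        have "g p = (\<Sum>ps\<in>prefs (card (insert (Suc k) S) + j'). t ^ cnt (run_W n d
             (insert (R n d (k+2)) Occ, T \<union> {nap}, R n d (k+2), Some nap, False, 0) ps))"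
          unfolding g_def r cS by simp
        also have "\<dots> = t ^ (if p = d then \<tau> else Suc \<tau>) * 2 ^ card (insert (Suc k) S) * F t (p = d) j'"
          by (rule less.IH[OF _ _ i]) (use jj j'_def in auto)
        finally show ?thesis using cS by (simp split: if_splits)
      qed
      have dd: "d \<noteq> -d" using d by auto
      show ?thesis using gp[of d] gp[of "-d"] dd True jj
        by (simp add: F_def algebra_simps)
    next
      case False
      have inv: "Inv n d k False S \<tau> (Occ,T,s,pn,w4,c)" using less.prems(2) False by simp
      have gp: "g p = t ^ \<tau> * 2 ^ card S * F t (p = d) (Suc j')"
        if p: "p \<in> {d, -d}" for p
      proof -
        define nap where "nap = (if p = d then N n d (k+1) else N n d k)"
        have r: "\<And>ps. run_W n d (Occ,T,s,pn,w4,c) (p#ps) =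
           run_W n d (insert (R n d (k+1)) Occ, T \<union> {nap}, R n d (k+1), Some nap, False, 0) ps"
          using trans_L(1)[OF inv kn p] unfolding nap_def by simp
        have i: "Inv n d (k+1) (p = d) S \<tau>
           (insert (R n d (k+1)) Occ, T \<union> {nap}, R n d (k+1), Some nap, False, 0)"
          using trans_L(2)[OF inv kn p] unfolding nap_def by simp
        have "g p = (\<Sum>ps\<in>prefs (card S + Suc j'). t ^ cnt (run_W n d
             (insert (R n d (k+1)) Occ, T \<union> {nap}, R n d (k+1), Some nap, False, 0) ps))"
          unfolding g_def r by simp
        also have "\<dots> = t ^ \<tau> * 2 ^ card S * F t (p = d) (Suc j')"
          by (rule less.IH[OF _ _ i]) (use jj j'_def kn in auto)
        finally show ?thesis .
      qed
      have dd: "d \<noteq> -d" using d by auto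
      show ?thesis using gp[of d] gp[of "-d"] dd False jj
        by (simp add: F_def algebra_simps)
    qed
    finally show ?thesis .
  qed
qed

lemma nu_W_Cons: "nu_W (p # ps) = cnt (run_W (Suc (length ps)) p
     ({0}, set_option (take_napkin (Suc (length ps)) {} 0 p), 0, take_napkin (Suc (length ps)) {} 0 p, False, 0) ps)"
  by (simp add: Let_def cnt_def split: prod.split)

lemma sum_first:
  assumes p: "p \<in> {1,-1}"
  shows "(\<Sum>ps\<in>prefs m. t ^ nu_W (p # ps)) = FA t m"
proof -
  define n where "n = Suc m"
  have n: "n > 0" unfolding n_def by simp
  have tk: "take_napkin n {} 0 p = Some (N n p 0)"
    by (simp add: take_napkin_def N_def)
  have "(\<Sum>ps\<in>prefs m. t ^ nu_W (p # ps)) =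
        (\<Sum>ps\<in>prefs m. t ^ cnt (run_W n p ({0}, {N n p 0}, 0, Some (N n p 0), False, 0) ps))"
    by (rule sum.cong) (auto simp del: nu_W.simps simp: nu_W_Cons prefs_def n_def[symmetric] tk)
  also have "\<dots> = t ^ 0 * 2 ^ card ({}::nat set) * F t True m"
  proof -
    have i: "Inv n p 0 True {} 0 ({0}, {N n p 0}, 0, Some (N n p 0), False, 0)"
      using p n by (auto simp: Inv_def)
    show ?thesis using phase[OF _ i, of m t] by (simp add: n_def)
  qed
  finally show ?thesis by (simp add: F_def)
qed

lemma W_poly_Suc: "W_poly (Suc m) t = 2 * FA t m"
  unfolding W_poly_def sum_prefs_Suc using sum_first[where p="-1" and m=m and t=t] sum_first[where p=1 and m=m and t=t] by simp

lemma W_gf_nth: "W_gf t $ n = (if n = 0 then 2 else 2 * FA t (n - 1))"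
  by (cases n) (simp_all add: W_gf_def W_poly_Suc)

lemma rhs_nth: "(2 - 2 * fps_X ^ 2 :: real fps) $ n = (if n = 0 then 2 else 0) - (if n = 2 then 2 else 0)"
proof -
  have "(2 - 2 * fps_X ^ 2 :: real fps) = fps_const 2 - fps_const 2 * fps_X ^ 2"
    by (simp only: fps_numeral_fps_const)
  then show ?thesis by simp
qed

lemma D_eq: "(1 - fps_X - 2 * fps_X ^ 2 - 2 * fps_const (t - 1) * fps_X ^ 3 :: real fps)
   = 1 - fps_X ^ 1 - fps_const 2 * fps_X ^ 2 - fps_const (2 * (t - 1)) * fps_X ^ 3"
proof -
  have e1: "(2::real fps) * fps_X^2 = fps_const 2 * fps_X^2" by (simp only: fps_numeral_fps_const)
  have e2: "2 * fps_const (t - 1) * fps_X ^ 3 = fps_const (2*(t-1)) * (fps_X::real fps)^3"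
    by (simp only: fps_numeral_fps_const fps_const_mult)
  show ?thesis by (simp only: e1 e2 power_one_right)
qed

lemma WD_eq: "(W :: real fps) * (1 - fps_X ^ 1 - fps_const a * fps_X ^ 2 - fps_const b * fps_X ^ 3)
   = W - W * fps_X ^ 1 - fps_const a * (W * fps_X ^ 2) - fps_const b * (W * fps_X ^ 3)"
  by algebra

theorem corollary3:
  fixes t :: real
  shows "W_gf t = (2 - 2 * fps_X ^ 2) /
                  (1 - fps_X - 2 * fps_X ^ 2 - 2 * fps_const (t - 1) * fps_X ^ 3)"
proof -
  define D :: "real fps" where "D = 1 - fps_X - 2 * fps_X ^ 2 - 2 * fps_const (t - 1) * fps_X ^ 3"
  have D0: "D \<noteq> 0"
  proof
    assume "D = 0"
    then have "D $ 0 = 0" by simp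
    then show False unfolding D_def by simp
  qed
  have WD: "W_gf t * D = W_gf t - W_gf t * fps_X ^ 1 - fps_const 2 * (W_gf t * fps_X ^ 2)
       - fps_const (2 * (t - 1)) * (W_gf t * fps_X ^ 3)"
    unfolding D_def D_eq by (rule WD_eq)
  have prod: "W_gf t * D = 2 - 2 * fps_X ^ 2"
  proof (rule fps_ext)
    fix n
    have "(W_gf t * D) $ n = W_gf t $ n - (if n < 1 then 0 else W_gf t $ (n - 1))
       - 2 * (if n < 2 then 0 else W_gf t $ (n - 2)) - 2 * (t - 1) * (if n < 3 then 0 else W_gf t $ (n - 3))"
      unfolding WD by (simp only: fps_sub_nth fps_mult_left_const_nth fps_X_power_mult_right_nth)
    also have "\<dots> = (if n = 0 then 2 else 0) - (if n = 2 then 2 else 0)"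
    proof -
      have "n = 0 \<or> n = 1 \<or> n = 2 \<or> n = 3 \<or> 4 \<le> n" by arith
      moreover
      { assume "4 \<le> n"
        then obtain m where m: "n = Suc (Suc (Suc (Suc m)))" by (metis add.commute add_Suc_right le_Suc_ex numeral_Bit0 numeral_2_eq_2 add_0 add_Suc)
        have "FA t (Suc (Suc (Suc m))) = FA t (Suc (Suc m)) + 2 * FA t (Suc m) + 2 * (t - 1) * FA t m"
          by (rule FA_rec)
        then have ?thesis using m by (simp add: W_gf_nth algebra_simps) }
      moreover
      { assume "n = 3"
        then have ?thesis by (simp add: W_gf_nth numeral_2_eq_2 numeral_3_eq_3 algebra_simps) }
      ultimately show ?thesis by (auto simp: W_gf_nth)
    qed
    also have "\<dots> = (2 - 2 * fps_X ^ 2 :: real fps) $ n" by (rule rhs_nth[symmetric])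
    finally show "(W_gf t * D) $ n = (2 - 2 * fps_X ^ 2 :: real fps) $ n" .
  qed
  have "(2 - 2 * fps_X ^ 2) / D = W_gf t * D / D" using prod by simp
  also have "\<dots> = W_gf t" using D0 by simp
  finally show ?thesis unfolding D_def by simp
qed

end
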